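(* Let $b\ge2$ be an integer and let $w$ be a fixed block of $b$-ary digits of length $p\ge1$. Let $k\ge1$. For every digit $d\in\{0,\dots,b-1\}$, $$\sum_{X:\,k_w(X)=k,\ X \text{ starts with } d} b^{-|X|}=b^{p-1}.$$ Moreover, $$\sum_{m} b^{-l(m)}=(b-1)\,b^{p-1},$$ where $m$ ranges over the positive integers whose minimal base-$b$ representation contains exactly $k$ occurrences of $w$, and $l(m)$ is the number of digits of that representation.
   Context: Strings are finite sequences over $\{0,\dots,b-1\}$, including the empty string. $|X|$ is the length of $X$. $k_w(X)$ is the number of possibly overlapping occurrences of $w$ in $X$: indices $i$ with $x_i\dots x_{i+p-1}=w$. The minimal representation of a positive integer is its base-$b$ digit string with no leading zeros. *)

theory Defs
  imports "HOL-Analysis.Analysis"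
begin

definition strings :: "nat \<Rightarrow> nat list set" where
  "strings b = {X. set X \<subseteq> {0..<b}}"

definition occ :: "nat list \<Rightarrow> nat list \<Rightarrow> nat" where
  "occ w X = card {i. i + length w \<le> length X \<and> take (length w) (drop i X) = w}"

function digs :: "nat \<Rightarrow> nat \<Rightarrow> nat list" where
  "digs b m = (if m = 0 \<or> b < 2 then [] else digs b (m div b) @ [m mod b])"
  by auto
termination
  by (relation "Wellfounded.measure (\<lambda>(b, m). m)") auto

end

theory Submission
  imports Defs
begin

definition endsw :: "nat list \<Rightarrow> nat list \<Rightarrow> bool" where
  "endsw w X \<longleftrightarrow> length w \<le> length X \<and> drop (length X - length w) X = w"

lemma occ_snoc:
  assumes "w \<noteq> []"
  shows "occ w (X @ [c]) = occ w X + (if endsw w (X @ [c]) then 1 else 0)"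
proof -
  let ?p = "length w"
  define I where "I Y = {i. i + ?p \<le> length Y \<and> take ?p (drop i Y) = w}" for Y
  have fin: "finite (I Y)" for Y unfolding I_def
    by (rule finite_subset[of _ "{..length Y}"]) auto
  have "I (X @ [c]) = I X \<union> (if endsw w (X @ [c]) then {length X + 1 - ?p} else {})"
  proof (intro set_eqI iffI)
    fix i assume "i \<in> I (X @ [c])"
    then have i: "i + ?p \<le> length X + 1" "take ?p (drop i (X @ [c])) = w" unfolding I_def by auto
    show "i \<in> I X \<union> (if endsw w (X @ [c]) then {length X + 1 - ?p} else {})"
    proof (cases "i + ?p \<le> length X")
      case True
      then have "take ?p (drop i (X @ [c])) = take ?p (drop i X)" by simp
      then show ?thesis using i True unfolding I_def by auto
    next
      case False
      then have ii: "i = length X + 1 - ?p" using i by auto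
      have "drop i (X @ [c]) = w" using i ii by simp
      then have "endsw w (X @ [c])" unfolding endsw_def using ii i by auto
      then show ?thesis using ii by simp
    qed
  next
    fix i assume "i \<in> I X \<union> (if endsw w (X @ [c]) then {length X + 1 - ?p} else {})"
    then show "i \<in> I (X @ [c])"
    proof
      assume "i \<in> I X" then show ?thesis unfolding I_def by auto
    next
      assume h: "i \<in> (if endsw w (X @ [c]) then {length X + 1 - ?p} else {})"
      then have e: "endsw w (X @ [c])" and ii: "i = length X + 1 - ?p" by (auto split: if_splits)
      then show ?thesis unfolding I_def endsw_def by auto
    qed
  qed
  moreover have "length X + 1 - ?p \<notin> I X" using assms unfolding I_def by auto
  ultimately show ?thesis using fin unfolding occ_def I_def[symmetric]
    by (auto simp: card_insert_if)
qed

lemma occ_Nil: "w \<noteq> [] \<Longrightarrow> occ w [] = 0"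
  unfolding occ_def by simp

lemma occ_self: "w \<noteq> [] \<Longrightarrow> occ w w = 1"
proof -
  have "{i. i + length w \<le> length w \<and> take (length w) (drop i w) = w} = {0}" by auto
  then show ?thesis unfolding occ_def by simp
qed

lemma occ_mono_append: "w \<noteq> [] \<Longrightarrow> occ w X \<le> occ w (X @ Y)"
proof (induction Y rule: rev_induct)
  case Nil then show ?case by simp
next
  case (snoc c Y)
  then show ?case using occ_snoc[of w "X @ Y" c] by simp
qed

lemma endsw_V0: "endsw w V \<Longrightarrow> V = take (length V - length w) V @ w"
  unfolding endsw_def by (metis append_take_drop_id)

lemma endsw_append_eq:
  assumes "endsw w V" shows "endsw w (V @ Y) = endsw w (w @ Y)"
proof -
  obtain V0 where V: "V = V0 @ w" using endsw_V0[OF assms] by blast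
  have "drop (length V0 + length Y) (V0 @ w @ Y) = drop (length Y) (w @ Y)"
    by (simp add: drop_append)
  then show ?thesis unfolding endsw_def V by (simp add: add.commute)
qed

lemma endsw_occ: assumes "w \<noteq> []" "endsw w X" shows "occ w X \<ge> 1"
proof -
  have "X \<noteq> []" using assms unfolding endsw_def by auto
  then obtain Y c where X: "X = Y @ [c]" by (metis append_butlast_last_id)
  show ?thesis using occ_snoc[OF assms(1), of Y c] assms X by simp
qed

lemma occ_append_endsw:
  assumes w: "w \<noteq> []" and e: "endsw w V"
  shows "occ w (V @ Z) + 1 = occ w V + occ w (w @ Z)"
proof (induction Z rule: rev_induct)
  case Nil then show ?case using occ_self[OF w] by simp
next
  case (snoc c Z)
  have "endsw w (V @ Z @ [c]) = endsw w (w @ Z @ [c])" using endsw_append_eq[OF e] by simp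
  then show ?case using snoc occ_snoc[OF w, of "V @ Z" c] occ_snoc[OF w, of "w @ Z" c] by simp
qed

lemma decomp_exists:
  assumes w: "w \<noteq> []" shows "occ w X \<ge> 1 \<Longrightarrow> \<exists>V Z. X = V @ Z \<and> endsw w V \<and> occ w (w @ Z) = 1"
proof (induction X rule: rev_induct)
  case Nil then show ?case using occ_Nil[OF w] by simp
next
  case (snoc c X)
  show ?case
  proof (cases "endsw w (X @ [c])")
    case True
    then show ?thesis using occ_self[OF w] by (intro exI[of _ "X @ [c]"] exI[of _ "[]"]) simp
  next
    case False
    then have "occ w X \<ge> 1" using snoc.prems occ_snoc[OF w, of X c] by simp
    then obtain V Z where VZ: "X = V @ Z" "endsw w V" "occ w (w @ Z) = 1" using snoc.IH by blast
    have "endsw w (w @ Z @ [c]) = endsw w (X @ [c])" using endsw_append_eq[OF VZ(2), of "Z @ [c]"] VZ(1) by simp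
    then have "occ w (w @ Z @ [c]) = 1" using False VZ(3) occ_snoc[OF w, of "w @ Z" c] by simp
    then show ?thesis using VZ by (intro exI[of _ V] exI[of _ "Z @ [c]"]) simp
  qed
qed

lemma decomp_unique_aux:
  assumes w: "w \<noteq> []" and e: "endsw w V" "endsw w (V @ Y)" and Y: "Y \<noteq> []"
  shows "occ w (w @ Y @ Z) \<ge> 2"
proof -
  have e2: "endsw w (w @ Y)" using endsw_append_eq[OF e(1)] e(2) by simp
  obtain Y0 c where Yc: "Y = Y0 @ [c]" using Y by (metis append_butlast_last_id)
  have "occ w (w @ Y) = occ w (w @ Y0) + 1" using occ_snoc[OF w, of "w @ Y0" c] e2 Yc by simp
  moreover have "occ w (w @ Y0) \<ge> 1" using occ_mono_append[OF w, of w Y0] occ_self[OF w] by simp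
  moreover have "occ w (w @ Y) \<le> occ w (w @ Y @ Z)" using occ_mono_append[OF w, of "w @ Y" Z] by simp
  ultimately show ?thesis by simp
qed

lemma decomp_unique:
  assumes w: "w \<noteq> []" and eq: "V @ Z = V' @ Z'" and e: "endsw w V" "endsw w V'"
    and o: "occ w (w @ Z) = 1" "occ w (w @ Z') = 1"
  shows "V = V' \<and> Z = Z'"
proof -
  have "length V = length V'"
  proof (rule ccontr)
    assume "length V \<noteq> length V'"
    then consider "length V < length V'" | "length V' < length V" by linarith
    then show False
    proof cases
      case 1
      then obtain Y where "V' = V @ Y" "Z = Y @ Z'" "Y \<noteq> []" using eq
        by (auto simp: append_eq_append_conv2)
      then show False using decomp_unique_aux[OF w e(1), of Y Z'] e(2) o(1) by simp
    next
      case 2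
      then obtain Y where "V = V' @ Y" "Z' = Y @ Z" "Y \<noteq> []" using eq
        by (auto simp: append_eq_append_conv2)
      then show False using decomp_unique_aux[OF w e(2), of Y Z] e(1) o(2) by simp
    qed
  qed
  then show ?thesis using eq by simp
qed

lemma has_sum_prod_nonneg:
  fixes f g :: "_ \<Rightarrow> real"
  assumes fa: "(f has_sum a) A" and gc: "(g has_sum c) B"
    and f0: "\<And>x. x \<in> A \<Longrightarrow> f x \<ge> 0" and g0: "\<And>y. y \<in> B \<Longrightarrow> g y \<ge> 0"
  shows "((\<lambda>(x,y). f x * g y) has_sum (a * c)) (A \<times> B)"
proof -
  let ?h = "\<lambda>(x,y). f x * g y"
  have sm: "?h summable_on (A \<times> B)"
  proof (rule nonneg_bdd_above_summable_on)
    show "\<And>z. z \<in> A \<times> B \<Longrightarrow> 0 \<le> ?h z" using f0 g0 by auto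
    show "bdd_above (sum ?h ` {F. F \<subseteq> A \<times> B \<and> finite F})"
    proof (rule bdd_aboveI2)
      fix F assume F: "F \<in> {F. F \<subseteq> A \<times> B \<and> finite F}"
      have s1: "fst ` F \<subseteq> A" "snd ` F \<subseteq> B" using F by auto
      have "sum ?h F \<le> sum ?h (fst ` F \<times> snd ` F)"
        apply (rule sum_mono2) using F s1 f0 g0 by (force intro!: mult_nonneg_nonneg)+
      also have "\<dots> = sum f (fst ` F) * sum g (snd ` F)"
        by (simp add: sum_product sum.cartesian_product)
      also have "\<dots> \<le> a * c"
      proof -
        have "sum f (fst ` F) \<le> a" using finite_sum_le_has_sum[OF fa] F s1 f0 by auto
        moreover have "sum g (snd ` F) \<le> c" using finite_sum_le_has_sum[OF gc] F s1 g0 by auto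
        moreover have "0 \<le> a" using has_sum_nonneg[OF fa] f0 by auto
        moreover have "0 \<le> sum g (snd ` F)" using s1 g0 by (auto intro: sum_nonneg)
        ultimately show ?thesis by (intro mult_mono) auto
      qed
      finally show "sum ?h F \<le> a * c" .
    qed
  qed
  have "infsum ?h (A \<times> B) = infsum (\<lambda>x. infsum (\<lambda>y. ?h (x,y)) B) A"
    using infsum_Sigma_banach[OF sm] by simp
  also have "\<dots> = infsum (\<lambda>x. f x * c) A"
    using has_sum_cmult_right[OF gc] by (intro infsum_cong) (simp add: infsumI)
  also have "\<dots> = a * c" using has_sum_cmult_left[OF fa] by (simp add: infsumI)
  finally show ?thesis using sm by (metis has_sum_infsum)
qed

definition wt :: "nat \<Rightarrow> nat list \<Rightarrow> real" where
  "wt b X = 1 / real b ^ length X"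

definition SS :: "nat \<Rightarrow> nat list \<Rightarrow> nat set \<Rightarrow> nat \<Rightarrow> nat list set" where
  "SS b w H j = {X \<in> strings b. X \<noteq> [] \<and> hd X \<in> H \<and> occ w X = j}"

definition WW :: "nat \<Rightarrow> nat list \<Rightarrow> nat set \<Rightarrow> nat \<Rightarrow> nat list set" where
  "WW b w H j = {X \<in> SS b w H j. endsw w X}"

definition RR :: "nat \<Rightarrow> nat list \<Rightarrow> nat list set" where
  "RR b w = {Z \<in> strings b. occ w (w @ Z) = 1}"

definition ext :: "nat \<Rightarrow> nat list set \<Rightarrow> nat list set" where
  "ext b A = (\<lambda>(X,c). X @ [c]) ` (A \<times> {0..<b})"

lemma wt_nonneg: "wt b X \<ge> 0" unfolding wt_def by simp

lemma wt_append: "wt b (X @ Y) = wt b X * wt b Y"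
  unfolding wt_def by (simp add: power_add)

lemma has_sum_ext:
  assumes b: "b > 0" and A: "(wt b has_sum s) A"
  shows "(wt b has_sum s) (ext b A)"
proof -
  have inj: "inj_on (\<lambda>(X,c). X @ [c]) (A \<times> {0..<b})" by (auto simp: inj_on_def)
  have g: "((\<lambda>c::nat. 1 / real b) has_sum 1) {0..<b}"
    using b by (intro has_sum_finiteI) auto
  have "((\<lambda>(X,c). wt b X * (1 / real b)) has_sum (s * 1)) (A \<times> {0..<b})"
    by (rule has_sum_prod_nonneg[OF A g]) (auto simp: wt_nonneg)
  then have "((wt b \<circ> (\<lambda>(X,c). X @ [c])) has_sum s) (A \<times> {0..<b})"
    by (simp add: o_def case_prod_unfold wt_append) (simp add: wt_def)
  then show ?thesis unfolding ext_def using has_sum_reindex[OF inj] by blast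
qed

lemma strings_append[simp]: "X @ Y \<in> strings b \<longleftrightarrow> X \<in> strings b \<and> Y \<in> strings b"
  unfolding strings_def by auto

lemma occ_single: "w \<noteq> [] \<Longrightarrow> occ w [c] = (if endsw w [c] then 1 else 0)"
  using occ_snoc[of w "[]" c] occ_Nil[of w] by simp

lemma set_eq_step:
  assumes w: "w \<noteq> []" and H: "H \<subseteq> {0..<b}"
  shows "SS b w H j \<union> WW b w H (Suc j) =
         ext b (SS b w H j) \<union> WW b w H j \<union> (if j = 0 then (\<lambda>c. [c]) ` H else {})"
proof (intro set_eqI iffI)
  fix X assume "X \<in> SS b w H j \<union> WW b w H (Suc j)"
  then have X: "X \<in> strings b" "X \<noteq> []" "hd X \<in> H" "occ w X = j \<or> (occ w X = Suc j \<and> endsw w X)"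
    "occ w X = j \<Longrightarrow> endsw w X \<Longrightarrow> X \<in> WW b w H j"
    unfolding SS_def WW_def by auto
  obtain Y c where Yc: "X = Y @ [c]" using X(2) by (metis append_butlast_last_id)
  have c: "c < b" using X(1) Yc unfolding strings_def by auto
  have o: "occ w X = occ w Y + (if endsw w X then 1 else 0)" using occ_snoc[OF w, of Y c] Yc by simp
  show "X \<in> ext b (SS b w H j) \<union> WW b w H j \<union> (if j = 0 then (\<lambda>c. [c]) ` H else {})"
  proof (cases "occ w X = j \<and> endsw w X")
    case True then show ?thesis using X by auto
  next
    case False
    then have oY: "occ w Y = j" using X(4) o by (auto split: if_splits)
    show ?thesis
    proof (cases "Y = []")
      case True
      then have "j = 0" using oY occ_Nil[OF w] by simp
      then show ?thesis using X(3) Yc True by auto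
    next
      case False
      then have "Y \<in> SS b w H j" using oY X Yc unfolding SS_def by auto
      then show ?thesis unfolding ext_def using Yc c by auto
    qed
  qed
next
  fix X assume "X \<in> ext b (SS b w H j) \<union> WW b w H j \<union> (if j = 0 then (\<lambda>c. [c]) ` H else {})"
  then consider (E) Y c where "X = Y @ [c]" "Y \<in> SS b w H j" "c < b" | (W) "X \<in> WW b w H j"
    | (S) c where "j = 0" "X = [c]" "c \<in> H"
    unfolding ext_def by (auto split: if_splits)
  then show "X \<in> SS b w H j \<union> WW b w H (Suc j)"
  proof cases
    case E
    then have o: "occ w X = j + (if endsw w X then 1 else 0)" using occ_snoc[OF w, of Y c]
      unfolding SS_def by simp
    have "X \<in> strings b" "X \<noteq> []" "hd X \<in> H" using E unfolding SS_def strings_def by auto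
    then show ?thesis using o unfolding SS_def WW_def by (auto split: if_splits)
  next
    case W then show ?thesis unfolding WW_def by auto
  next
    case S
    have "X \<in> strings b" using S H unfolding strings_def by auto
    then show ?thesis using S occ_single[OF w, of c] unfolding SS_def WW_def by (auto split: if_splits)
  qed
qed

lemma WW_0: "w \<noteq> [] \<Longrightarrow> WW b w H 0 = {}"
  unfolding WW_def SS_def using endsw_occ by fastforce

lemma W_step:
  assumes b: "b > 0" and w: "w \<noteq> []" and H: "H \<subseteq> {0..<b}"
    and sm: "wt b summable_on SS b w H j" and v: "(wt b has_sum v) (WW b w H j)"
  shows "(wt b has_sum (v + (if j = 0 then card H / b else 0))) (WW b w H (Suc j))"
proof -
  define \<sigma> where "\<sigma> = infsum (wt b) (SS b w H j)"
  have S: "(wt b has_sum \<sigma>) (SS b w H j)" using sm unfolding \<sigma>_def by (rule has_sum_infsum)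
  have E: "(wt b has_sum \<sigma>) (ext b (SS b w H j))" by (rule has_sum_ext[OF b S])
  define T where "T = (if j = 0 then (\<lambda>c. [c]) ` H else {})"
  have finH: "finite H" using H finite_subset by blast
  have T: "(wt b has_sum (if j = 0 then card H / b else 0)) T"
  proof (cases "j = 0")
    case True
    have "sum (wt b) ((\<lambda>c. [c]) ` H) = sum (\<lambda>c. wt b [c]) H"
      by (subst sum.reindex) (auto simp: inj_on_def)
    also have "\<dots> = card H / b" by (simp add: wt_def)
    finally show ?thesis using True finH unfolding T_def by (intro has_sum_finiteI) auto
  qed (simp add: T_def)
  have d1: "ext b (SS b w H j) \<inter> WW b w H j = {}"
  proof -
    { fix Y c assume Y: "Y \<in> SS b w H j" and e: "Y @ [c] \<in> WW b w H j"
      then have "occ w (Y @ [c]) = j + 1" using occ_snoc[OF w, of Y c] unfolding SS_def WW_def by simp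
      then have False using e unfolding WW_def SS_def by simp }
    then show ?thesis unfolding ext_def by auto
  qed
  have d2: "(ext b (SS b w H j) \<union> WW b w H j) \<inter> T = {}"
    unfolding T_def ext_def SS_def using WW_0[OF w] by (auto split: if_splits)
  have R: "(wt b has_sum (\<sigma> + v + (if j = 0 then card H / b else 0)))
      (ext b (SS b w H j) \<union> WW b w H j \<union> T)"
    by (intro has_sum_Un_disjoint E v T d1 d2)
  have eq: "SS b w H j \<union> WW b w H (Suc j) = ext b (SS b w H j) \<union> WW b w H j \<union> T"
    unfolding T_def by (rule set_eq_step[OF w H])
  have "wt b summable_on WW b w H (Suc j)"
    using R eq by (metis Un_upper2 summable_on_def summable_on_subset_banach)
  then obtain u where u: "(wt b has_sum u) (WW b w H (Suc j))" unfolding summable_on_def by blast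
  have d3: "SS b w H j \<inter> WW b w H (Suc j) = {}" unfolding WW_def SS_def by auto
  have "(wt b has_sum (\<sigma> + u)) (SS b w H j \<union> WW b w H (Suc j))"
    by (intro has_sum_Un_disjoint S u d3)
  then have "\<sigma> + u = \<sigma> + v + (if j = 0 then card H / b else 0)"
    using R eq has_sum_unique by metis
  then show ?thesis using u by simp
qed

lemma geom_block_bound:
  fixes a :: "nat \<Rightarrow> real" and q :: real
  assumes p: "p \<ge> 1" and a0: "\<And>n. 0 \<le> a n" and a1: "\<And>n. a n \<le> 1"
    and q: "0 \<le> q" "q < 1" and rec: "\<And>n. a (n + p) \<le> q * a n"
  shows "(\<Sum>n<N. a n) \<le> p / (1 - q)"
proof (induction N rule: less_induct)
  case (less N)
  have pq: "real p \<le> p / (1 - q)" using q p by (simp add: field_simps)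
  show ?case
  proof (cases "N \<le> p")
    case True
    have "(\<Sum>n<N. a n) \<le> (\<Sum>n<N. 1)" by (intro sum_mono a1)
    also have "\<dots> \<le> p" using True by simp
    finally show ?thesis using pq by linarith
  next
    case False
    then obtain M where M: "N = M + p" by (metis add.commute le_add_diff_inverse nat_le_linear)
    have split: "(\<Sum>n<M + p. a n) = (\<Sum>n<p. a n) + (\<Sum>n<M. a (n + p))"
    proof (induction M)
      case 0 then show ?case by simp
    next
      case (Suc M) then show ?case by (simp add: add.commute add.left_commute)
    qed
    have "(\<Sum>n<p. a n) \<le> (\<Sum>n<p. 1)" by (intro sum_mono a1)
    then have s1: "(\<Sum>n<p. a n) \<le> p" by simp
    have "(\<Sum>n<M. a (n + p)) \<le> (\<Sum>n<M. q * a n)" by (intro sum_mono rec)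
    also have "\<dots> = q * (\<Sum>n<M. a n)" by (simp add: sum_distrib_left)
    also have "\<dots> \<le> q * (p / (1 - q))"
      using less.IH[of M] M p q by (intro mult_left_mono) auto
    finally have s2: "(\<Sum>n<M. a (n + p)) \<le> q * (p / (1 - q))" .
    have "p + q * (p / (1 - q)) = p / (1 - q)" using q by (simp add: field_simps)
    then show ?thesis unfolding M using split s1 s2 by linarith
  qed
qed

definition Lw :: "nat \<Rightarrow> nat \<Rightarrow> nat list set" where
  "Lw b n = {X. set X \<subseteq> {0..<b} \<and> length X = n}"

lemma finite_Lw: "finite (Lw b n)" unfolding Lw_def by (rule finite_lists_length_eq) simp

lemma card_Lw: "card (Lw b n) = b ^ n" unfolding Lw_def using card_lists_length_eq[of "{0..<b}" n] by simp

lemma av_rec: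
  assumes w: "w \<in> strings b" "w \<noteq> []"
  shows "card {X \<in> Lw b (n + length w). occ w X = 0} \<le> (b ^ length w - 1) * card {X \<in> Lw b n. occ w X = 0}"
proof -
  let ?p = "length w"
  let ?A = "{X \<in> Lw b (n + ?p). occ w X = 0}"
  let ?B = "{X \<in> Lw b n. occ w X = 0} \<times> (Lw b ?p - {w})"
  have inj: "inj_on (\<lambda>Y. (take n Y, drop n Y)) ?A"
    by (rule inj_onI) (metis append_take_drop_id prod.inject)
  have sub: "(\<lambda>Y. (take n Y, drop n Y)) ` ?A \<subseteq> ?B"
  proof
    fix z assume "z \<in> (\<lambda>Y. (take n Y, drop n Y)) ` ?A"
    then obtain Y where Y: "Y \<in> Lw b (n + ?p)" "occ w Y = 0" and z: "z = (take n Y, drop n Y)" by auto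
    have "occ w (take n Y) \<le> occ w (take n Y @ drop n Y)" by (rule occ_mono_append[OF w(2)])
    then have o1: "occ w (take n Y) = 0" using Y by simp
    have "drop n Y \<noteq> w"
    proof
      assume "drop n Y = w"
      then have "endsw w Y" using Y unfolding endsw_def Lw_def by simp
      then show False using endsw_occ[OF w(2)] Y by fastforce
    qed
    moreover have "take n Y \<in> Lw b n" "drop n Y \<in> Lw b ?p" using Y unfolding Lw_def
      by (auto dest: in_set_takeD in_set_dropD)
    ultimately show "z \<in> ?B" using o1 z by auto
  qed
  have finB: "finite ?B" using finite_Lw by auto
  have "card ?A \<le> card ?B" by (rule card_inj_on_le[OF inj sub finB])
  also have "card ?B = card {X \<in> Lw b n. occ w X = 0} * (b ^ ?p - 1)"
  proof -
    have "w \<in> Lw b ?p" using w unfolding Lw_def strings_def by auto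
    then have "card (Lw b ?p - {w}) = b ^ ?p - 1" using finite_Lw card_Lw by (simp add: card_Diff_singleton)
    then show ?thesis by (simp add: card_cartesian_product)
  qed
  finally show ?thesis by (simp add: mult.commute)
qed


lemma av_summable:
  assumes b: "b \<ge> 2" and w: "w \<in> strings b" "w \<noteq> []"
  shows "wt b summable_on {X \<in> strings b. occ w X = 0}"
proof (rule nonneg_bdd_above_summable_on)
  show "\<And>x. x \<in> {X \<in> strings b. occ w X = 0} \<Longrightarrow> 0 \<le> wt b x" by (rule wt_nonneg)
  let ?p = "length w"
  define A where "A n = {X \<in> Lw b n. occ w X = 0}" for n
  define a where "a n = real (card (A n)) / real b ^ n" for n
  define q where "q = (real b ^ ?p - 1) / real b ^ ?p"
  have bp: "real b ^ ?p \<ge> 2"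
  proof -
    have "real b ^ ?p \<ge> real b ^ 1" using b w by (intro power_increasing) (auto simp: Suc_le_eq)
    moreover have "real b \<ge> 2" using b by simp
    ultimately show ?thesis by (simp only: power_one_right)
  qed
  have q: "0 \<le> q" "q < 1"
  proof -
    define B where "B = real b ^ ?p"
    have B: "B \<ge> 2" using bp unfolding B_def .
    have "0 \<le> (B - 1) / B" using B by simp
    moreover have "(B - 1) / B < 1" using B by simp
    ultimately show "0 \<le> q" "q < 1" unfolding q_def B_def by auto
  qed
  have a0: "0 \<le> a n" for n unfolding a_def by simp
  have a1: "a n \<le> 1" for n
  proof -
    have "card (A n) \<le> card (Lw b n)" unfolding A_def by (intro card_mono finite_Lw) auto
    then have "real (card (A n)) \<le> real b ^ n" using card_Lw[of b n] by (metis of_nat_le_iff of_nat_power)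
    then show ?thesis unfolding a_def using b by (simp add: field_simps)
  qed
  have rec: "a (n + ?p) \<le> q * a n" for n
  proof -
    have nat_ineq: "card (A (n + ?p)) \<le> (b ^ ?p - 1) * card (A n)"
      unfolding A_def using av_rec[OF w] by blast
    have b1: "1 \<le> b ^ ?p" using b by simp
    define B where "B = real b ^ ?p"
    define C where "C = real b ^ n"
    have C: "C > 0" unfolding C_def using b by simp
    have B: "B > 0" unfolding B_def using b by simp
    have "real (card (A (n + ?p))) \<le> real ((b ^ ?p - 1) * card (A n))"
      using nat_ineq of_nat_le_iff by blast
    also have "real ((b ^ ?p - 1) * card (A n)) = (B - 1) * real (card (A n))"
      unfolding B_def using b1 by (simp add: of_nat_diff)
    finally have h: "real (card (A (n + ?p))) \<le> (B - 1) * real (card (A n))" .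
    have "a (n + ?p) = real (card (A (n + ?p))) / (C * B)"
      unfolding a_def B_def C_def by (simp add: power_add)
    also have "\<dots> \<le> (B - 1) * real (card (A n)) / (C * B)"
      using h B C by (intro divide_right_mono) auto
    also have "\<dots> = ((B - 1) / B) * (real (card (A n)) / C)"
      by simp
    also have "\<dots> = q * a n" unfolding q_def a_def B_def C_def by simp
    finally show ?thesis .
  qed
  have p1: "?p \<ge> 1" using w by (cases w) auto
  have bound: "(\<Sum>n<N. a n) \<le> ?p / (1 - q)" for N
    using geom_block_bound[of ?p a q N] p1 a0 a1 q rec by blast
  show "bdd_above (sum (wt b) ` {F. F \<subseteq> {X \<in> strings b. occ w X = 0} \<and> finite F})"
  proof (rule bdd_aboveI2)
    fix F assume F: "F \<in> {F. F \<subseteq> {X \<in> strings b. occ w X = 0} \<and> finite F}"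
    define N where "N = Suc (Max (insert 0 (length ` F)))"
    have sub: "F \<subseteq> (\<Union>n\<in>{..<N}. A n)"
    proof
      fix X assume X: "X \<in> F"
      then have "length X \<le> Max (insert 0 (length ` F))" using F by (intro Max_ge) auto
      then have "length X < N" unfolding N_def by simp
      then show "X \<in> (\<Union>n\<in>{..<N}. A n)" using X F unfolding A_def Lw_def strings_def by auto
    qed
    have "sum (wt b) F \<le> sum (wt b) (\<Union>n\<in>{..<N}. A n)"
      using sub by (intro sum_mono2) (auto simp: A_def finite_Lw wt_nonneg)
    also have "\<dots> = (\<Sum>n<N. sum (wt b) (A n))"
    proof (rule sum.UNION_disjoint)
      show "\<forall>i\<in>{..<N}. finite (A i)" unfolding A_def using finite_Lw by auto
    qed (auto simp: A_def Lw_def)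
    also have "\<dots> = (\<Sum>n<N. a n)"
    proof (intro sum.cong refl)
      fix n
      have "sum (wt b) (A n) = sum (\<lambda>_. 1 / real b ^ n) (A n)"
        by (intro sum.cong refl) (auto simp: A_def Lw_def wt_def)
      then show "sum (wt b) (A n) = a n" unfolding a_def by simp
    qed
    also have "\<dots> \<le> ?p / (1 - q)" by (rule bound)
    finally show "sum (wt b) F \<le> ?p / (1 - q)" .
  qed
qed


lemma W1:
  assumes b: "b \<ge> 2" and w: "w \<in> strings b" "w \<noteq> []" and H: "H \<subseteq> {0..<b}"
  shows "(wt b has_sum (card H / b)) (WW b w H 1)"
proof -
  have "wt b summable_on SS b w H 0"
    using av_summable[OF b w] by (rule summable_on_subset_banach) (auto simp: SS_def)
  then show ?thesis using W_step[of b w H 0 0] b w H WW_0[OF w(2)] by simp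
qed

lemma occ_rev: "occ (rev w) (rev X) = occ w X"
proof -
  let ?p = "length w"
  define I where "I = {i. i + ?p \<le> length X \<and> take ?p (drop i X) = w}"
  define J where "J = {i. i + ?p \<le> length X \<and> take ?p (drop i (rev X)) = rev w}"
  have key: "take ?p (drop (length X - ?p - i) (rev X)) = rev (take ?p (drop i X))"
    if "i + ?p \<le> length X" for i
  proof -
    have "drop (length X - ?p - i) (rev X) = rev (take (?p + i) X)"
      using that by (simp add: drop_rev)
    moreover have "length X - ?p = i" if "length X \<le> ?p + i" using that \<open>i + ?p \<le> length X\<close> by simp
    ultimately show ?thesis using that by (simp add: take_rev drop_take min_def)
  qed
  have "J = (\<lambda>i. length X - ?p - i) ` I"
  proof (intro set_eqI iffI)
    fix j assume j: "j \<in> J"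
    let ?i = "length X - ?p - j"
    have i: "?i + ?p \<le> length X" using j unfolding J_def by auto
    have "j = length X - ?p - ?i" using j unfolding J_def by auto
    moreover have "take ?p (drop ?i X) = w"
      using key[OF i] j \<open>j = length X - ?p - ?i\<close> unfolding J_def by (metis (mono_tags) mem_Collect_eq rev_rev_ident)
    ultimately show "j \<in> (\<lambda>i. length X - ?p - i) ` I" using i unfolding I_def by blast
  next
    fix j assume "j \<in> (\<lambda>i. length X - ?p - i) ` I"
    then obtain i where i: "i \<in> I" "j = length X - ?p - i" by blast
    then show "j \<in> J" using key[of i] unfolding I_def J_def by auto
  qed
  moreover have "inj_on (\<lambda>i. length X - ?p - i) I" unfolding I_def by (rule inj_onI) auto
  ultimately have "card J = card I" by (simp add: card_image)
  then show ?thesis unfolding occ_def I_def J_def by simp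
qed

lemma endsw_rev: "endsw (rev w) (rev X) \<longleftrightarrow> take (length w) X = w"
proof
  assume "endsw (rev w) (rev X)"
  then have "length w \<le> length X" "drop (length X - length w) (rev X) = rev w" unfolding endsw_def by auto
  then show "take (length w) X = w" by (simp add: drop_rev)
next
  assume h: "take (length w) X = w"
  then have "length (take (length w) X) = length w" by simp
  then have l: "length w \<le> length X" by simp
  then show "endsw (rev w) (rev X)" unfolding endsw_def using h by (simp add: drop_rev)
qed

lemma strings_rev[simp]: "rev X \<in> strings b \<longleftrightarrow> X \<in> strings b" unfolding strings_def by simp

lemma hd_strings: "Y \<in> strings b \<Longrightarrow> Y \<noteq> [] \<Longrightarrow> hd Y < b"
  by (cases Y) (auto simp: strings_def)

lemma kac:
  assumes b: "b \<ge> 2" and w: "w \<in> strings b" "w \<noteq> []"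
  shows "(wt b has_sum (real b ^ length w)) (RR b w)"
proof -
  let ?D = "{0..<b}"
  have rw: "rev w \<in> strings b" "rev w \<noteq> []" using w by auto
  have G: "(wt b has_sum 1) (WW b (rev w) ?D 1)" using W1[OF b rw, of ?D] b by simp
  have "(wt b has_sum 1) (rev ` WW b (rev w) ?D 1)"
  proof -
    have "wt b \<circ> rev = wt b" by (simp add: fun_eq_iff wt_def)
    then show ?thesis using G has_sum_reindex[of rev "WW b (rev w) ?D 1" "wt b" 1] by simp
  qed
  moreover have "rev ` WW b (rev w) ?D 1 = (\<lambda>Z. w @ Z) ` RR b w"
  proof (intro set_eqI iffI)
    fix X assume "X \<in> rev ` WW b (rev w) ?D 1"
    then obtain Y where Y: "Y \<in> WW b (rev w) ?D 1" "X = rev Y" by blast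
    then have X: "X \<in> strings b" "occ w X = 1" "take (length w) X = w"
      unfolding WW_def SS_def using occ_rev[of w X] endsw_rev[of w X] by auto
    then have "X = w @ drop (length w) X" by (metis append_take_drop_id)
    moreover have "drop (length w) X \<in> RR b w" using X calculation unfolding RR_def strings_def
      by (auto dest: in_set_dropD)
    ultimately show "X \<in> (\<lambda>Z. w @ Z) ` RR b w" by blast
  next
    fix X assume "X \<in> (\<lambda>Z. w @ Z) ` RR b w"
    then obtain Z where Z: "Z \<in> RR b w" "X = w @ Z" by blast
    have "rev X \<in> strings b" "occ (rev w) (rev X) = 1" "endsw (rev w) (rev X)"
      using Z w occ_rev[of w X] endsw_rev[of w X] unfolding RR_def by auto
    moreover have "rev X \<noteq> []" using Z w by simp
    moreover have "hd (rev X) \<in> ?D" using hd_strings calculation(1,4) by auto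
    ultimately have "rev X \<in> WW b (rev w) ?D 1" unfolding WW_def SS_def by auto
    then show "X \<in> rev ` WW b (rev w) ?D 1" by (metis image_eqI rev_rev_ident)
  qed
  ultimately have "(wt b has_sum 1) ((\<lambda>Z. w @ Z) ` RR b w)" by simp
  then have "((\<lambda>Z. wt b w * wt b Z) has_sum 1) (RR b w)"
    using has_sum_reindex[of "\<lambda>Z. w @ Z" "RR b w" "wt b" 1] by (simp add: o_def wt_append inj_on_def)
  then have "((\<lambda>Z. real b ^ length w * (wt b w * wt b Z)) has_sum (real b ^ length w * 1)) (RR b w)"
    by (rule has_sum_cmult_right)
  moreover have "real b ^ length w * (wt b w * wt b Z) = wt b Z" for Z
    using b by (simp add: wt_def)
  ultimately show ?thesis by simp
qed

lemma S_decomp: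
  assumes w: "w \<noteq> []" and j: "j \<ge> 1"
  shows "SS b w H j = (\<lambda>(V,Z). V @ Z) ` (WW b w H j \<times> RR b w)"
proof (intro set_eqI iffI)
  fix X assume X: "X \<in> SS b w H j"
  then have "occ w X \<ge> 1" using j unfolding SS_def by simp
  then obtain V Z where VZ: "X = V @ Z" "endsw w V" "occ w (w @ Z) = 1" using decomp_exists[OF w] by blast
  have oV: "occ w V = j" using occ_append_endsw[OF w VZ(2), of Z] VZ X unfolding SS_def by simp
  have V0: "V \<noteq> []" using VZ(2) w unfolding endsw_def by auto
  have "V \<in> WW b w H j" using X VZ oV V0 unfolding WW_def SS_def by auto
  moreover have "Z \<in> RR b w" using X VZ unfolding RR_def SS_def by auto
  ultimately show "X \<in> (\<lambda>(V,Z). V @ Z) ` (WW b w H j \<times> RR b w)" using VZ(1) by auto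
next
  fix X assume "X \<in> (\<lambda>(V,Z). V @ Z) ` (WW b w H j \<times> RR b w)"
  then obtain V Z where VZ: "X = V @ Z" "V \<in> WW b w H j" "Z \<in> RR b w" by auto
  have "occ w X = j" using occ_append_endsw[OF w, of V Z] VZ unfolding WW_def SS_def RR_def by simp
  then show "X \<in> SS b w H j" using VZ unfolding WW_def SS_def RR_def by auto
qed

lemma S_inj:
  assumes w: "w \<noteq> []"
  shows "inj_on (\<lambda>(V,Z). V @ Z) (WW b w H j \<times> RR b w)"
proof (rule inj_onI)
  fix x y assume x: "x \<in> WW b w H j \<times> RR b w" and y: "y \<in> WW b w H j \<times> RR b w"
    and eq: "(\<lambda>(V,Z). V @ Z) x = (\<lambda>(V,Z). V @ Z) y"
  obtain V Z V' Z' where xy: "x = (V, Z)" "y = (V', Z')" by fastforce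
  have "endsw w V" "endsw w V'" "occ w (w @ Z) = 1" "occ w (w @ Z') = 1"
    using x y xy unfolding WW_def RR_def by auto
  moreover have "V @ Z = V' @ Z'" using eq xy by simp
  ultimately show "x = y" using decomp_unique[OF w] xy by blast
qed

lemma main_induct:
  assumes b: "b \<ge> 2" and w: "w \<in> strings b" "w \<noteq> []" and H: "H \<subseteq> {0..<b}"
  shows "(k \<ge> 1 \<longrightarrow> (wt b has_sum (card H / b)) (WW b w H k)
                \<and> (wt b has_sum (card H / b * real b ^ length w)) (SS b w H k))
         \<and> wt b summable_on SS b w H k"
proof (induction k)
  case 0
  have "wt b summable_on SS b w H 0"
    using av_summable[OF b w] by (rule summable_on_subset_banach) (auto simp: SS_def)
  then show ?case by simp
next
  case (Suc k)
  have v: "(wt b has_sum (if k = 0 then 0 else card H / b)) (WW b w H k)"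
    using Suc.IH WW_0[OF w(2)] by (cases "k = 0") auto
  have Wk: "(wt b has_sum (card H / b)) (WW b w H (Suc k))"
    using W_step[OF _ w(2) H _ v] b Suc.IH by (cases "k = 0") auto
  have prod: "((\<lambda>(V,Z). wt b V * wt b Z) has_sum (card H / b * real b ^ length w)) (WW b w H (Suc k) \<times> RR b w)"
    by (rule has_sum_prod_nonneg[OF Wk kac[OF b w]]) (auto simp: wt_nonneg)
  let ?c = "card H / b * real b ^ length w"
  have eqf: "wt b \<circ> (\<lambda>(V,Z). V @ Z) = (\<lambda>(V,Z). wt b V * wt b Z)"
    by (auto simp: fun_eq_iff wt_append)
  have "(wt b has_sum ?c) ((\<lambda>(V,Z). V @ Z) ` (WW b w H (Suc k) \<times> RR b w))
        \<longleftrightarrow> ((wt b \<circ> (\<lambda>(V,Z). V @ Z)) has_sum ?c) (WW b w H (Suc k) \<times> RR b w)"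
    by (rule has_sum_reindex[OF S_inj[OF w(2)]])
  then have "(wt b has_sum ?c) ((\<lambda>(V,Z). V @ Z) ` (WW b w H (Suc k) \<times> RR b w))"
    using prod unfolding eqf by blast
  then have Sk: "(wt b has_sum ?c) (SS b w H (Suc k))"
    by (subst S_decomp[OF w(2)]) auto
  have "wt b summable_on SS b w H (Suc k)" using Sk unfolding summable_on_def by blast
  then show ?case using Wk Sk by blast
qed

definition val :: "nat \<Rightarrow> nat list \<Rightarrow> nat" where
  "val b X = foldl (\<lambda>a d. a * b + d) 0 X"

lemma val_snoc: "val b (X @ [c]) = val b X * b + c" unfolding val_def by simp

lemma digs_0[simp]: "digs b 0 = []" by simp

lemma digs_pos: "b \<ge> 2 \<Longrightarrow> m > 0 \<Longrightarrow> digs b m = digs b (m div b) @ [m mod b]"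
  by (subst digs.simps) simp

declare digs.simps[simp del]

lemma digs_props:
  assumes b: "b \<ge> 2"
  shows "digs b m \<in> strings b \<and> val b (digs b m) = m \<and> (m > 0 \<longrightarrow> digs b m \<noteq> [] \<and> hd (digs b m) \<noteq> 0)"
proof (induction m rule: less_induct)
  case (less m)
  show ?case
  proof (cases "m = 0")
    case True then show ?thesis by (simp add: strings_def val_def)
  next
    case False
    have lt: "m div b < m" using False b by simp
    note IH = less.IH[OF lt]
    have d: "digs b m = digs b (m div b) @ [m mod b]" using digs_pos[OF b] False by simp
    have s: "digs b m \<in> strings b" using IH d b unfolding strings_def by auto
    have v: "val b (digs b m) = m" using IH d by (simp add: val_snoc)
    have h: "hd (digs b m) \<noteq> 0"
    proof (cases "m div b = 0")
      case True
      then have "m < b" using b by (simp add: div_eq_0_iff)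
      then show ?thesis using d True False by simp
    next
      case False
      then show ?thesis using IH d by simp
    qed
    show ?thesis using s v h d by simp
  qed
qed

lemma digs_val:
  assumes b: "b \<ge> 2"
  shows "X \<in> strings b \<Longrightarrow> X \<noteq> [] \<Longrightarrow> hd X \<noteq> 0 \<Longrightarrow> digs b (val b X) = X \<and> val b X > 0"
proof (induction X rule: rev_induct)
  case Nil then show ?case by simp
next
  case (snoc c X)
  have c: "c < b" using snoc.prems unfolding strings_def by auto
  show ?case
  proof (cases "X = []")
    case True
    then have "c > 0" using snoc.prems by simp
    moreover have "val b [c] = c" unfolding val_def by simp
    moreover have "digs b c = [c]" using digs_pos[OF b, of c] c calculation(1) by simp
    ultimately show ?thesis using True by simp
  next
    case False
    have "X \<in> strings b" "hd X \<noteq> 0" using snoc.prems False by auto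
    then have IH: "digs b (val b X) = X" "val b X > 0" using snoc.IH False by auto
    have v: "val b (X @ [c]) = val b X * b + c" by (rule val_snoc)
    have pos: "val b (X @ [c]) > 0" using v IH b by simp
    have "(val b X * b + c) div b = val b X" "(val b X * b + c) mod b = c" using c b by auto
    then have "digs b (val b (X @ [c])) = X @ [c]" using digs_pos[OF b pos] IH v by simp
    then show ?thesis using pos by simp
  qed
qed

theorem proposition1:
  fixes b p k :: nat and w :: "nat list"
  assumes "b \<ge> 2" and "w \<in> strings b" and "length w = p" and "p \<ge> 1" and "k \<ge> 1"
  shows "(\<forall>d<b. ((\<lambda>X. 1 / real b ^ length X) has_sum (real b ^ (p - 1)))
              {X \<in> strings b. occ w X = k \<and> X \<noteq> [] \<and> hd X = d})
       \<and> ((\<lambda>m. 1 / real b ^ length (digs b m)) has_sum ((real b - 1) * real b ^ (p - 1)))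
              {m::nat. m > 0 \<and> occ w (digs b m) = k}"
proof -
  have b: "b \<ge> 2" and w: "w \<in> strings b" "w \<noteq> []" using assms by auto
  have bp: "real b ^ p / real b = real b ^ (p - 1)"
  proof -
    have "real b ^ p = real b * real b ^ (p - 1)" using assms(4) by (metis Suc_diff_1 less_le_trans zero_less_one power_Suc)
    then show ?thesis using b by simp
  qed
  have main: "(wt b has_sum (card H / b * real b ^ p)) (SS b w H k)" if H: "H \<subseteq> {0..<b}" for H
    using main_induct[OF b w H, of k] assms by simp
  have part1: "((\<lambda>X. 1 / real b ^ length X) has_sum (real b ^ (p - 1)))
              {X \<in> strings b. occ w X = k \<and> X \<noteq> [] \<and> hd X = d}" if d: "d < b" for d
  proof -
    have "(wt b has_sum (card {d} / b * real b ^ p)) (SS b w {d} k)" using main[of "{d}"] d by simp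
    moreover have "SS b w {d} k = {X \<in> strings b. occ w X = k \<and> X \<noteq> [] \<and> hd X = d}"
      unfolding SS_def by auto
    moreover have "card {d} / b * real b ^ p = real b ^ (p - 1)" using bp by simp
    ultimately show ?thesis unfolding wt_def[abs_def] by simp
  qed
  have part2: "((\<lambda>m. 1 / real b ^ length (digs b m)) has_sum ((real b - 1) * real b ^ (p - 1)))
              {m::nat. m > 0 \<and> occ w (digs b m) = k}"
  proof -
    let ?M = "{m::nat. m > 0 \<and> occ w (digs b m) = k}"
    have inj: "inj_on (digs b) ?M"
      by (rule inj_onI) (metis digs_props[OF b])
    have img: "digs b ` ?M = SS b w {1..<b} k"
    proof (intro set_eqI iffI)
      fix X assume "X \<in> digs b ` ?M"
      then obtain m where "m \<in> ?M" "X = digs b m" by blast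
      then show "X \<in> SS b w {1..<b} k" using digs_props[OF b, of m] hd_strings[of X b]
        unfolding SS_def by auto
    next
      fix X assume X: "X \<in> SS b w {1..<b} k"
      then have "digs b (val b X) = X \<and> val b X > 0" using digs_val[OF b] unfolding SS_def by auto
      then show "X \<in> digs b ` ?M" using X unfolding SS_def by (metis (mono_tags, lifting) image_eqI mem_Collect_eq)
    qed
    have "(wt b has_sum (card {1..<b} / b * real b ^ p)) (digs b ` ?M)" using main[of "{1..<b}"] img by simp
    then have "((wt b \<circ> digs b) has_sum (card {1..<b} / b * real b ^ p)) ?M"
      using has_sum_reindex[OF inj] by blast
    moreover have "card {1..<b} / b * real b ^ p = (real b - 1) * real b ^ (p - 1)"
    proof -
      have "real (card {1..<b}) = real b - 1" using b by (simp add: of_nat_diff)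
      then show ?thesis using bp by (metis times_divide_eq_left times_divide_eq_right)
    qed
    ultimately show ?thesis by (simp add: o_def wt_def)
  qed
  show ?thesis using part1 part2 by blast
qed

end
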